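(* Let $H$ and $E$ be Hilbert spaces, let $T:H\to H$ be a bounded linear operator with $\ker T=\{0\}$, let $\gamma:E\to H$ be a bounded linear operator with $\ker\gamma=\{0\}$ and $\mathcal{R}(T)\cap\mathcal{R}(\gamma)=\{0\}$, and let $\Lambda$ be a linear operator in $E$ with domain $\mathcal{D}(\Lambda)$. Define $A,\Gamma_0$ on $\mathcal{R}(T)\dot+\mathcal{R}(\gamma)$ by $A(Tf+\gamma\varphi)=f$, $\Gamma_0(Tf+\gamma\varphi)=\varphi$, and $\Gamma_1$ on $\mathcal{R}(T)\dot+\gamma\mathcal{D}(\Lambda)$ by $\Gamma_1(Tf+\gamma\varphi)=\gamma^*f+\Lambda\varphi$. For $\lambda\in\mathbb{C}$ with $I-\lambda T$ boundedly invertible, let $M(\lambda)$ be defined by $M(\lambda)\Gamma_0u=\Gamma_1u$ for $u\in\ker(A-\lambda I)\cap\mathcal{D}(\Gamma_1)$. Then $\lambda\mapsto M(\lambda)-M(0)$, defined for $\lambda$ with $I-\lambda T$ boundedly invertible, is an analytic operator-function whose values are bounded operators in $E$.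
   Context: $\mathcal{R}(\cdot)$ denotes range, $\dot+$ direct sum, $\gamma^*$ the adjoint of $\gamma$. Note $M(0)=\Lambda$ on $\mathcal{D}(\Lambda)$; the statement means $M(\lambda)-M(0)$, defined on $\mathcal{D}(\Lambda)$, extends to a bounded operator on $E$ depending analytically on $\lambda$. *)

theory Defs
  imports "HOL-Analysis.Analysis"
begin

class complex_vector = real_vector +
  fixes scaleC :: "complex \<Rightarrow> 'a \<Rightarrow> 'a" (infixr "*\<^sub>C" 75)
  assumes scaleC_add_right: "scaleC a (x + y) = scaleC a x + scaleC a y"
    and scaleC_add_left: "scaleC (a + b) x = scaleC a x + scaleC b x"
    and scaleC_scaleC: "scaleC a (scaleC b x) = scaleC (a * b) x"
    and scaleC_one: "scaleC 1 x = x"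
    and scaleR_scaleC: "scaleR r x = scaleC (complex_of_real r) x"

class complex_inner = complex_vector + real_normed_vector +
  fixes cinner :: "'a \<Rightarrow> 'a \<Rightarrow> complex"
  assumes cinner_commute: "cinner x y = cnj (cinner y x)"
    and cinner_add_left: "cinner (x + y) z = cinner x z + cinner y z"
    and cinner_scaleC_left: "cinner (scaleC r x) y = cnj r * cinner x y"
    and cinner_nonneg: "0 \<le> Re (cinner x x)"
    and cinner_eq_zero_iff: "cinner x x = 0 \<longleftrightarrow> x = 0"
    and norm_eq_sqrt_cinner: "norm x = sqrt (Re (cinner x x))"

class chilbert = complex_inner + complete_space

definition clinear :: "('a::complex_vector \<Rightarrow> 'b::complex_vector) \<Rightarrow> bool" where
  "clinear f \<longleftrightarrow> (\<forall>x y. f (x + y) = f x + f y) \<and> (\<forall>c x. f (c *\<^sub>C x) = c *\<^sub>C f x)"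

definition bounded_clinear :: "('a::complex_inner \<Rightarrow> 'b::complex_inner) \<Rightarrow> bool" where
  "bounded_clinear f \<longleftrightarrow> clinear f \<and> (\<exists>K. \<forall>x. norm (f x) \<le> norm x * K)"

definition csubspace :: "'a::complex_vector set \<Rightarrow> bool" where
  "csubspace S \<longleftrightarrow> 0 \<in> S \<and> (\<forall>x\<in>S. \<forall>y\<in>S. x + y \<in> S) \<and> (\<forall>c. \<forall>x\<in>S. c *\<^sub>C x \<in> S)"

definition clinear_operator :: "'a::complex_vector set \<Rightarrow> ('a \<Rightarrow> 'b::complex_vector) \<Rightarrow> bool" where
  "clinear_operator D L \<longleftrightarrow> csubspace D \<and>
     (\<forall>x\<in>D. \<forall>y\<in>D. L (x + y) = L x + L y) \<and> (\<forall>c. \<forall>x\<in>D. L (c *\<^sub>C x) = c *\<^sub>C L x)"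

definition boundedly_invertible :: "('a::complex_inner \<Rightarrow> 'a) \<Rightarrow> bool" where
  "boundedly_invertible F \<longleftrightarrow>
     (\<exists>S. bounded_clinear S \<and> (\<forall>x. S (F x) = x) \<and> (\<forall>x. F (S x) = x))"

definition adjoint_op :: "('e::complex_inner \<Rightarrow> 'h::complex_inner) \<Rightarrow> 'h \<Rightarrow> 'e" where
  "adjoint_op g f = (THE y. \<forall>e. cinner y e = cinner f (g e))"

definition domA :: "('h \<Rightarrow> 'h::complex_vector) \<Rightarrow> ('e \<Rightarrow> 'h) \<Rightarrow> 'h set" where
  "domA T g = {T f + g \<phi> | f \<phi>. True}"

definition opA :: "('h \<Rightarrow> 'h::complex_vector) \<Rightarrow> ('e \<Rightarrow> 'h) \<Rightarrow> 'h \<Rightarrow> 'h" where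
  "opA T g u = (THE f. \<exists>\<phi>. u = T f + g \<phi>)"

definition Gamma0 :: "('h \<Rightarrow> 'h::complex_vector) \<Rightarrow> ('e \<Rightarrow> 'h) \<Rightarrow> 'h \<Rightarrow> 'e" where
  "Gamma0 T g u = (THE \<phi>. \<exists>f. u = T f + g \<phi>)"

definition domGamma1 :: "('h \<Rightarrow> 'h::complex_vector) \<Rightarrow> ('e \<Rightarrow> 'h) \<Rightarrow> 'e set \<Rightarrow> 'h set" where
  "domGamma1 T g D = {T f + g \<phi> | f \<phi>. \<phi> \<in> D}"

definition Gamma1 :: "('h \<Rightarrow> 'h::complex_inner) \<Rightarrow> ('e::complex_inner \<Rightarrow> 'h) \<Rightarrow> ('e \<Rightarrow> 'e) \<Rightarrow> 'h \<Rightarrow> 'e" where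
  "Gamma1 T g L u = adjoint_op g (opA T g u) + L (Gamma0 T g u)"

definition kerAz :: "('h \<Rightarrow> 'h::complex_inner) \<Rightarrow> ('e::complex_inner \<Rightarrow> 'h) \<Rightarrow> 'e set \<Rightarrow> complex \<Rightarrow> 'h set" where
  "kerAz T g D z = {u \<in> domGamma1 T g D. opA T g u = z *\<^sub>C u}"

text \<open>Graph of M(z): pairs \<open>(Gamma0 u, Gamma1 u)\<close>, u in \<open>ker (A - z I) \<inter> D(Gamma1)\<close>.\<close>
definition Mgraph :: "('h \<Rightarrow> 'h::complex_inner) \<Rightarrow> ('e::complex_inner \<Rightarrow> 'h) \<Rightarrow> ('e \<Rightarrow> 'e) \<Rightarrow> 'e set \<Rightarrow> complex \<Rightarrow> ('e \<times> 'e) set" where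
  "Mgraph T g L D z = {(Gamma0 T g u, Gamma1 T g L u) | u. u \<in> kerAz T g D z}"

text \<open>Complex differentiability in operator norm (holomorphy of a
  Banach-space-valued function, equivalent to analyticity).\<close>
definition op_has_cderiv :: "(complex \<Rightarrow> 'e::complex_inner \<Rightarrow> 'e) \<Rightarrow> ('e \<Rightarrow> 'e) \<Rightarrow> complex \<Rightarrow> bool" where
  "op_has_cderiv B D z \<longleftrightarrow>
     ((\<lambda>w. onorm (\<lambda>x. B w x - B z x - (w - z) *\<^sub>C D x) / cmod (w - z)) \<longlongrightarrow> 0) (at z)"

definition analytic_op_function :: "complex set \<Rightarrow> (complex \<Rightarrow> 'e::complex_inner \<Rightarrow> 'e) \<Rightarrow> bool" where
  "analytic_op_function S B \<longleftrightarrow> open S \<and>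
     (\<forall>z\<in>S. bounded_clinear (B z) \<and> (\<exists>D. bounded_clinear D \<and> op_has_cderiv B D z))"

end

theory Submission
  imports Defs
begin

lemma sC0l[simp]: "(0::complex) *\<^sub>C (x::'a::complex_vector) = 0"
  by (metis scaleR_scaleC scaleR_zero_left of_real_0)
lemma sCm1: "(-1::complex) *\<^sub>C (x::'a::complex_vector) = - x"
  by (metis scaleR_scaleC scaleR_minus1_left of_real_minus of_real_1)
lemma sC0r[simp]: "c *\<^sub>C (0::'a::complex_vector) = 0"
  by (metis add_cancel_right_left scaleC_add_right add_0)
lemma sC_minus_right: "c *\<^sub>C (- x::'a::complex_vector) = - (c *\<^sub>C x)"
  by (metis sCm1 scaleC_scaleC mult.commute)
lemma sC_minus_left: "(- c) *\<^sub>C (x::'a::complex_vector) = - (c *\<^sub>C x)"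
  by (metis sCm1 scaleC_scaleC mult_minus1)
lemma sC_diff_right: "c *\<^sub>C (x - y::'a::complex_vector) = c *\<^sub>C x - c *\<^sub>C y"
  by (metis diff_conv_add_uminus sC_minus_right scaleC_add_right)
lemma sC_diff_left: "(a - b) *\<^sub>C (x::'a::complex_vector) = a *\<^sub>C x - b *\<^sub>C x"
  by (metis diff_conv_add_uminus sC_minus_left scaleC_add_left)
lemma sC_eq0: "c *\<^sub>C (x::'a::complex_vector) = 0 \<longleftrightarrow> c = 0 \<or> x = 0"
proof
  assume h: "c *\<^sub>C x = 0"
  show "c = 0 \<or> x = 0"
  proof (cases "c = 0")
    case False
    have "x = (inverse c * c) *\<^sub>C x" using False by (simp add: scaleC_one)
    also have "\<dots> = inverse c *\<^sub>C (c *\<^sub>C x)" by (simp add: scaleC_scaleC)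
    finally show ?thesis using h by simp
  qed simp
qed auto

lemma ci_add_right: "cinner x (y + z) = cinner x y + cinner (x::'a::complex_inner) z"
proof -
  have "cinner x (y + z) = cnj (cinner (y + z) x)" by (rule cinner_commute)
  also have "\<dots> = cnj (cinner y x) + cnj (cinner z x)" by (simp add: cinner_add_left)
  also have "\<dots> = cinner x y + cinner x z" by (simp only: cinner_commute[of x y] cinner_commute[of x z])
  finally show ?thesis .
qed
lemma ci_scaleC_right: "cinner x (c *\<^sub>C y) = c * cinner (x::'a::complex_inner) y"
proof -
  have "cinner x (c *\<^sub>C y) = cnj (cinner (c *\<^sub>C y) x)" by (rule cinner_commute)
  also have "\<dots> = c * cnj (cinner y x)" by (simp add: cinner_scaleC_left)
  also have "\<dots> = c * cinner x y" by (simp only: cinner_commute[of x y])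
  finally show ?thesis .
qed
lemma ci_zero_left[simp]: "cinner 0 (y::'a::complex_inner) = 0"
  using cinner_add_left[of 0 0 y] by simp
lemma ci_zero_right[simp]: "cinner y (0::'a::complex_inner) = 0"
  using ci_add_right[of y 0 0] by simp
lemma ci_minus_left: "cinner (- x) (y::'a::complex_inner) = - cinner x y"
proof -
  have "cinner x y + cinner (-x) y = 0" using cinner_add_left[of x "-x" y] by simp
  thus ?thesis by (simp add: add_eq_0_iff)
qed
lemma ci_minus_right: "cinner y (- x::'a::complex_inner) = - cinner y x"
proof -
  have "cinner y x + cinner y (-x) = 0" using ci_add_right[of y x "-x"] by simp
  thus ?thesis by (simp add: add_eq_0_iff)
qed
lemma ci_diff_left: "cinner (x - z) (y::'a::complex_inner) = cinner x y - cinner z y"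
  by (simp only: diff_conv_add_uminus cinner_add_left ci_minus_left)
lemma ci_diff_right: "cinner y (x - z::'a::complex_inner) = cinner y x - cinner y z"
  by (simp only: diff_conv_add_uminus ci_add_right ci_minus_right)

lemma ci_self: "cinner x (x::'a::complex_inner) = complex_of_real ((norm x)^2)"
proof -
  have "Im (cinner x x) = Im (cnj (cinner x x))" by (rule arg_cong[OF cinner_commute[of x x]])
  moreover have "Im (cnj (cinner x x)) = - Im (cinner x x)" by simp
  ultimately have "Im (cinner x x) = 0" by linarith
  moreover have "(norm x)^2 = Re (cinner x x)" using norm_eq_sqrt_cinner[of x] cinner_nonneg[of x] by simp
  ultimately show ?thesis by (simp add: complex_eq_iff)
qed

lemma norm_sC: "norm (c *\<^sub>C (x::'a::complex_inner)) = cmod c * norm x"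
proof -
  have "complex_of_real ((norm (c *\<^sub>C x))^2) = cinner (c *\<^sub>C x) (c *\<^sub>C x)" by (rule ci_self[symmetric])
  also have "\<dots> = cnj c * (c * cinner x x)" by (simp only: cinner_scaleC_left ci_scaleC_right mult.left_commute)
  also have "\<dots> = (cnj c * c) * complex_of_real ((norm x)^2)" by (simp only: ci_self mult.assoc)
  also have "cnj c * c = complex_of_real ((cmod c)^2)" by (metis complex_norm_square mult.commute)
  finally have "complex_of_real ((norm (c *\<^sub>C x))^2) = complex_of_real ((cmod c)^2 * (norm x)^2)"
    by (simp only: of_real_mult)
  hence "(norm (c *\<^sub>C x))^2 = (cmod c * norm x)^2" by (simp only: of_real_eq_iff power_mult_distrib)
  thus ?thesis by (simp add: power2_eq_iff_nonneg)
qed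

lemma norm_expand: "(norm (x - t *\<^sub>C y))^2 = (norm x)^2 - 2 * Re (t * cinner x y) + (cmod t)^2 * (norm (y::'a::complex_inner))^2"
proof -
  have e: "cinner (x - t *\<^sub>C y) (x - t *\<^sub>C y) = cinner x x - t * cinner x y - cnj (t * cinner x y) + cnj t * t * cinner y y"
    by (simp add: ci_diff_left ci_diff_right ci_scaleC_right cinner_scaleC_left algebra_simps
        cinner_commute[of y x])
  have "Re (t * cinner x y) + Re (cnj (t * cinner x y)) = 2 * Re (t * cinner x y)" by simp
  moreover have "cnj t * t = complex_of_real ((cmod t)^2)" by (metis complex_norm_square mult.commute of_real_power)
  ultimately show ?thesis using arg_cong[OF e, of Re] by (simp add: ci_self)
qed

lemma cauchy_schwarz: "cmod (cinner x y) \<le> norm x * norm (y::'a::complex_inner)"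
proof (cases "y = 0")
  case True thus ?thesis by simp
next
  case False
  hence ny: "norm y > 0" by simp
  define t where "t = cinner y x / complex_of_real ((norm y)^2)"
  have cc: "cinner x y * cnj (cinner x y) = complex_of_real ((cmod (cinner x y))^2)"
    by (metis complex_norm_square of_real_power)
  have "t * cinner x y = complex_of_real ((cmod (cinner x y))^2 / (norm y)^2)"
    unfolding t_def using ny cc
    by (simp add: cinner_commute[of y x] field_simps mult.commute)
  moreover have "cmod t = cmod (cinner x y) / (norm y)^2"
  proof -
    have "cmod (cinner y x) = cmod (cinner x y)" by (metis cinner_commute complex_mod_cnj)
    thus ?thesis unfolding t_def by (simp add: norm_divide norm_power)
  qed
  ultimately have E: "(norm (x - t *\<^sub>C y))^2 = (norm x)^2 - 2 * ((cmod (cinner x y))^2 / (norm y)^2) + (cmod (cinner x y) / (norm y)^2)^2 * (norm y)^2"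
    using norm_expand[of x t y] by simp
  have "0 \<le> (norm (x - t *\<^sub>C y))^2" by simp
  hence "0 \<le> (norm x)^2 - 2 * ((cmod (cinner x y))^2 / (norm y)^2) + (cmod (cinner x y) / (norm y)^2)^2 * (norm y)^2"
    using E by linarith
  moreover have "(cmod (cinner x y) / (norm y)^2)^2 * (norm y)^2 = (cmod (cinner x y))^2 / (norm y)^2"
    using ny by (simp add: power2_eq_square)
  ultimately have "(cmod (cinner x y))^2 / (norm y)^2 \<le> (norm x)^2" by linarith
  hence "(cmod (cinner x y))^2 \<le> (norm x)^2 * (norm y)^2" using ny by (simp add: pos_divide_le_eq)
  hence "(cmod (cinner x y))^2 \<le> (norm x * norm y)^2" by (simp add: power_mult_distrib)
  thus ?thesis by (rule power2_le_imp_le) simp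
qed

lemma parallelogram: "(norm (x + y))^2 + (norm (x - y))^2 = 2 * (norm x)^2 + 2 * (norm (y::'a::complex_inner))^2"
proof -
  have a: "x - (-1) *\<^sub>C y = x + y" by (simp add: sCm1)
  have b: "x - 1 *\<^sub>C y = x - y" by (simp add: scaleC_one)
  show ?thesis using norm_expand[of x "-1" y] norm_expand[of x 1 y] unfolding a b by simp
qed


lemma expand_opt:
  assumes "(y::'a::complex_inner) \<noteq> 0"
  shows "(norm (x - (cinner y x / complex_of_real ((norm y)^2)) *\<^sub>C y))^2 = (norm x)^2 - (cmod (cinner x y))^2 / (norm y)^2"
proof -
  have ny: "norm y > 0" using assms by simp
  define t where "t = cinner y x / complex_of_real ((norm y)^2)"
  have cc: "cinner x y * cnj (cinner x y) = complex_of_real ((cmod (cinner x y))^2)"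
    by (metis complex_norm_square of_real_power)
  have "t * cinner x y = complex_of_real ((cmod (cinner x y))^2 / (norm y)^2)"
    unfolding t_def using ny cc
    by (simp add: cinner_commute[of y x] field_simps mult.commute)
  moreover have "cmod t = cmod (cinner x y) / (norm y)^2"
  proof -
    have "cmod (cinner y x) = cmod (cinner x y)" by (metis cinner_commute complex_mod_cnj)
    thus ?thesis unfolding t_def by (simp add: norm_divide norm_power)
  qed
  ultimately have E: "(norm (x - t *\<^sub>C y))^2 = (norm x)^2 - 2 * ((cmod (cinner x y))^2 / (norm y)^2) + (cmod (cinner x y) / (norm y)^2)^2 * (norm y)^2"
    using norm_expand[of x t y] by simp
  moreover have "(cmod (cinner x y) / (norm y)^2)^2 * (norm y)^2 = (cmod (cinner x y))^2 / (norm y)^2"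
    using ny by (simp add: power2_eq_square)
  ultimately show ?thesis unfolding t_def by linarith
qed

lemma clinear_additive: "clinear f \<Longrightarrow> Modules.additive f"
  unfolding clinear_def Modules.additive_def by simp

lemma clin_add: "clinear f \<Longrightarrow> f (x + y) = f x + f y" unfolding clinear_def by simp
lemma clin_scale: "clinear f \<Longrightarrow> f (c *\<^sub>C x) = c *\<^sub>C f x" unfolding clinear_def by simp
lemma clin_zero: "clinear f \<Longrightarrow> f 0 = 0" using clinear_additive Modules.additive.zero by blast
lemma clin_diff: "clinear f \<Longrightarrow> f (x - y) = f x - f y" using clinear_additive Modules.additive.diff by blast
lemma clin_minus: "clinear f \<Longrightarrow> f (- x) = - f x" using clinear_additive Modules.additive.minus by blast

lemma bcl_clinear: "bounded_clinear f \<Longrightarrow> clinear f" unfolding bounded_clinear_def by simp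
lemma bcl_bound: assumes "bounded_clinear f" obtains K where "K > 0" "\<And>x. norm (f x) \<le> norm x * K"
proof -
  obtain K where K: "\<forall>x. norm (f x) \<le> norm x * K" using assms unfolding bounded_clinear_def by blast
  have "\<forall>x. norm (f x) \<le> norm x * max K 1"
    by (metis K max.cobounded1 mult_left_mono norm_ge_zero order_trans)
  thus ?thesis using that[of "max K 1"] by auto
qed

lemma riesz:
  fixes \<phi> :: "'a::chilbert \<Rightarrow> complex"
  assumes add: "\<And>x y. \<phi> (x + y) = \<phi> x + \<phi> y"
    and sc: "\<And>c x. \<phi> (c *\<^sub>C x) = c * \<phi> x"
    and bd: "\<And>x. cmod (\<phi> x) \<le> K * norm x"
  shows "\<exists>y. \<forall>e. cinner y e = \<phi> e"
proof (cases "\<forall>x. \<phi> x = 0")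
  case True thus ?thesis by (intro exI[of _ 0]) simp
next
  case False
  then obtain x0 where x0: "\<phi> x0 \<noteq> 0" by blast
  interpret ad: Modules.additive \<phi> by standard (rule add)
  define N where "N = {n. \<phi> n = 0}"
  have N0: "0 \<in> N" unfolding N_def by (simp add: ad.zero)
  have Nadd: "a + b \<in> N" if "a \<in> N" "b \<in> N" for a b using that unfolding N_def by (simp add: add)
  have NsC: "c *\<^sub>C a \<in> N" if "a \<in> N" for a c using that unfolding N_def by (simp add: sc)
  have NsR: "r *\<^sub>R a \<in> N" if "a \<in> N" for a r using NsC[OF that] by (simp add: scaleR_scaleC)
  define S where "S = (\<lambda>n. norm (x0 - n)) ` N"
  define d where "d = Inf S"
  have Sne: "S \<noteq> {}" unfolding S_def using N0 by blast
  have Sbdd: "bdd_below S" unfolding S_def bdd_below_def by (intro exI[of _ 0]) auto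
  have dle: "d \<le> norm (x0 - n)" if "n \<in> N" for n
    unfolding d_def S_def by (rule cInf_lower) (use that Sbdd[unfolded S_def] in auto)
  have d0: "0 \<le> d" unfolding d_def by (rule cInf_greatest[OF Sne]) (auto simp: S_def)
  have "\<forall>k. \<exists>n. n \<in> N \<and> norm (x0 - n) < d + inverse (real (Suc k))"
  proof
    fix k
    have "Inf S < d + inverse (real (Suc k))" unfolding d_def by simp
    from cInf_lessD[OF Sne this] show "\<exists>n. n \<in> N \<and> norm (x0 - n) < d + inverse (real (Suc k))"
      unfolding S_def by auto
  qed
  from choice[OF this] obtain ns where ns: "\<And>k. ns k \<in> N" "\<And>k. norm (x0 - ns k) < d + inverse (real (Suc k))"
    by blast
  define eps where "eps = (\<lambda>k::nat. inverse (real (Suc k)))"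
  have key: "(norm (ns j - ns k))^2 \<le> 2 * (d + eps j)^2 + 2 * (d + eps k)^2 - 4 * d^2" for j k
  proof -
    define a where "a = x0 - ns j"
    define b where "b = x0 - ns k"
    have mid: "(1/2) *\<^sub>R (ns j + ns k) \<in> N" by (intro NsR Nadd ns)
    have "a + b = 2 *\<^sub>R (x0 - (1/2) *\<^sub>R (ns j + ns k))" unfolding a_def b_def
      by (simp add: algebra_simps scaleR_2)
    hence "norm (a + b) = 2 * norm (x0 - (1/2) *\<^sub>R (ns j + ns k))" by simp
    hence nab: "2 * d \<le> norm (a + b)" using dle[OF mid] by simp
    have "a - b = ns k - ns j" unfolding a_def b_def by simp
    hence "norm (ns j - ns k) = norm (a - b)" by (simp add: norm_minus_commute)
    moreover have "(norm (a + b))^2 + (norm (a - b))^2 = 2 * (norm a)^2 + 2 * (norm b)^2" by (rule parallelogram)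
    moreover have "(2 * d)^2 \<le> (norm (a + b))^2" using nab d0 by (intro power_mono) auto
    moreover have "(norm a)^2 \<le> (d + eps j)^2" unfolding a_def eps_def using ns(2)[of j]
      by (intro power_mono) auto
    moreover have "(norm b)^2 \<le> (d + eps k)^2" unfolding b_def eps_def using ns(2)[of k]
      by (intro power_mono) auto
    ultimately show ?thesis by (simp add: power_mult_distrib)
  qed
  have epsle: "eps k \<le> inverse (real (Suc M))" if "k \<ge> M" for k M
    unfolding eps_def using that by (simp add: le_imp_inverse_le)
  have eps0: "0 \<le> eps k" for k unfolding eps_def by simp
  have "Cauchy ns"
  proof (rule CauchyI)
    fix e :: real assume e: "0 < e"
    obtain M :: nat where M: "inverse (real (Suc M)) < e^2 / (4 * (2 * d + 1))"
      using reals_Archimedean[of "e^2 / (4 * (2 * d + 1))"] e d0 by auto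
    show "\<exists>M. \<forall>m\<ge>M. \<forall>n\<ge>M. norm (ns m - ns n) < e"
    proof (intro exI allI impI)
      fix m n assume mn: "M \<le> m" "M \<le> n"
      define q where "q = inverse (real (Suc M))"
      have q: "0 \<le> q" "q \<le> 1" unfolding q_def by (auto simp: inverse_le_1_iff)
      have em: "eps m \<le> q" "eps n \<le> q" using epsle mn unfolding q_def by auto
      have "(d + eps m)^2 \<le> (d + q)^2" using em eps0 d0 by (intro power_mono) auto
      moreover have "(d + eps n)^2 \<le> (d + q)^2" using em eps0 d0 by (intro power_mono) auto
      ultimately have "(norm (ns m - ns n))^2 \<le> 4 * (d + q)^2 - 4 * d^2" using key[of m n] by linarith
      also have "\<dots> = 4 * q * (2 * d + q)" by (simp add: power2_eq_square algebra_simps)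
      also have "\<dots> \<le> 4 * q * (2 * d + 1)" using q d0 by (intro mult_left_mono) auto
      also have "\<dots> < e^2" using M d0 unfolding q_def by (simp add: field_simps)
      finally have "(norm (ns m - ns n))^2 < e^2" .
      thus "norm (ns m - ns n) < e" using e by (simp add: power_less_imp_less_base)
    qed
  qed
  hence "convergent ns" by (rule Cauchy_convergent)
  then obtain n0 where lim: "ns \<longlonglongrightarrow> n0" unfolding convergent_def by blast
  have limz: "(\<lambda>k. norm (ns k - n0)) \<longlonglongrightarrow> 0"
    using tendsto_norm_zero[OF LIM_zero[OF lim]] .
  have lim2: "(\<lambda>k. norm (ns k - n0) * K) \<longlonglongrightarrow> 0" using tendsto_mult_left_zero[OF limz, of K] by simp
  have ev: "\<exists>N. \<forall>k\<ge>N. cmod (\<phi> n0) \<le> norm (ns k - n0) * K"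
  proof -
    show "\<exists>N. \<forall>k\<ge>N. cmod (\<phi> n0) \<le> norm (ns k - n0) * K"
    proof (intro exI[of _ 0] allI impI)
      fix k :: nat assume "0 \<le> k"
      have "\<phi> n0 = - \<phi> (ns k - n0)" using ns(1)[of k] unfolding N_def by (simp add: ad.diff)
      hence "cmod (\<phi> n0) = cmod (\<phi> (ns k - n0))" by simp
      thus "cmod (\<phi> n0) \<le> norm (ns k - n0) * K" using bd[of "ns k - n0"] by (simp add: mult.commute)
    qed
  qed
  have "cmod (\<phi> n0) \<le> 0" by (rule LIMSEQ_le_const[OF lim2 ev])
  hence n0N: "n0 \<in> N" unfolding N_def by simp
  have "norm (x0 - n0) \<le> d"
  proof (rule LIMSEQ_le)
    show "(\<lambda>k. norm (x0 - ns k)) \<longlonglongrightarrow> norm (x0 - n0)" by (intro tendsto_intros lim)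
    show "(\<lambda>k. d + inverse (real (Suc k))) \<longlonglongrightarrow> d"
      using tendsto_add[OF tendsto_const LIMSEQ_inverse_real_of_nat, of d] by simp
    show "\<exists>N. \<forall>k\<ge>N. norm (x0 - ns k) \<le> d + inverse (real (Suc k))" using ns(2) less_imp_le by blast
  qed
  define w where "w = x0 - n0"
  have wmin: "norm w \<le> norm (w - m)" if "m \<in> N" for m
  proof -
    have "n0 + m \<in> N" using Nadd[OF n0N that] .
    hence "d \<le> norm (x0 - (n0 + m))" by (rule dle)
    moreover have "x0 - (n0 + m) = w - m" unfolding w_def by simp
    ultimately show ?thesis using \<open>norm (x0 - n0) \<le> d\<close> unfolding w_def by simp
  qed
  have orth: "cinner w m = 0" if "m \<in> N" for m
  proof (cases "m = 0")
    case True thus ?thesis by simp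
  next
    case False
    define t where "t = cinner m w / complex_of_real ((norm m)^2)"
    have "t *\<^sub>C m \<in> N" using NsC[OF that] .
    hence "norm w \<le> norm (w - t *\<^sub>C m)" by (rule wmin)
    hence "(norm w)^2 \<le> (norm (w - t *\<^sub>C m))^2" by (intro power_mono) auto
    also have "\<dots> = (norm w)^2 - (cmod (cinner w m))^2 / (norm m)^2" unfolding t_def by (rule expand_opt[OF False])
    finally have "(cmod (cinner w m))^2 / (norm m)^2 \<le> 0" by simp
    hence "(cmod (cinner w m))^2 \<le> 0" using False by (simp add: divide_le_0_iff)
    thus ?thesis by simp
  qed
  have pw: "\<phi> w = \<phi> x0" unfolding w_def using n0N unfolding N_def by (simp add: ad.diff)
  hence pw0: "\<phi> w \<noteq> 0" using x0 by simp
  hence w0: "w \<noteq> 0" using ad.zero by auto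
  hence nw: "complex_of_real ((norm w)^2) \<noteq> 0" by simp
  define y where "y = (cnj (\<phi> w) / complex_of_real ((norm w)^2)) *\<^sub>C w"
  show ?thesis
  proof (intro exI[of _ y] allI)
    fix e
    define m where "m = e - (\<phi> e / \<phi> w) *\<^sub>C w"
    have "\<phi> m = 0" unfolding m_def using pw0 by (simp add: ad.diff sc)
    hence "cinner w m = 0" using orth unfolding N_def by simp
    hence we: "cinner w e = (\<phi> e / \<phi> w) * complex_of_real ((norm w)^2)"
      unfolding m_def by (simp add: ci_diff_right ci_scaleC_right ci_self)
    have "cinner y e = (\<phi> w / complex_of_real ((norm w)^2)) * cinner w e"
      unfolding y_def by (simp add: cinner_scaleC_left)
    also have "\<dots> = \<phi> e" unfolding we using pw0 nw by (simp add: field_simps)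
    finally show "cinner y e = \<phi> e" .
  qed
qed

lemma cinner_ext: "(\<And>e. cinner y e = cinner y' (e::'a::complex_inner)) \<Longrightarrow> y = y'"
proof -
  assume h: "\<And>e. cinner y e = cinner y' e"
  have "cinner (y - y') (y - y') = 0" using h[of "y - y'"] by (simp add: ci_diff_left)
  thus ?thesis by (simp add: cinner_eq_zero_iff)
qed

lemma adjoint_exists:
  fixes g :: "'e::chilbert \<Rightarrow> 'h::complex_inner"
  assumes "bounded_clinear g"
  shows "\<exists>y. \<forall>e. cinner y e = cinner f (g e)"
proof -
  have cl: "clinear g" using assms by (rule bcl_clinear)
  obtain K where K: "K > 0" "\<And>x. norm (g x) \<le> norm x * K" using bcl_bound[OF assms] by blast
  show ?thesis
  proof (rule riesz[where K = "norm f * K"])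
    show "cinner f (g (x + y)) = cinner f (g x) + cinner f (g y)" for x y
      by (simp add: clin_add[OF cl] ci_add_right)
    show "cinner f (g (c *\<^sub>C x)) = c * cinner f (g x)" for c x
      by (simp add: clin_scale[OF cl] ci_scaleC_right)
    show "cmod (cinner f (g x)) \<le> norm f * K * norm x" for x
    proof -
      have "cmod (cinner f (g x)) \<le> norm f * norm (g x)" by (rule cauchy_schwarz)
      also have "\<dots> \<le> norm f * (norm x * K)" by (intro mult_left_mono K(2)) simp
      finally show ?thesis by (simp add: mult_ac)
    qed
  qed
qed

lemma adjoint_prop:
  assumes "bounded_clinear (g :: 'e::chilbert \<Rightarrow> 'h::complex_inner)"
  shows "cinner (adjoint_op g f) e = cinner f (g e)"
proof -
  obtain y where y: "\<forall>e. cinner y e = cinner f (g e)" using adjoint_exists[OF assms] by blast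
  have "(\<forall>e. cinner (adjoint_op g f) e = cinner f (g e))"
    unfolding adjoint_op_def
  proof (rule theI[of _ y])
    show "\<forall>e. cinner y e = cinner f (g e)" by (rule y)
    show "y' = y" if "\<forall>e. cinner y' e = cinner f (g e)" for y'
      using that y by (intro cinner_ext) simp
  qed
  thus ?thesis by blast
qed

lemma adjoint_unique:
  assumes "bounded_clinear (g :: 'e::chilbert \<Rightarrow> 'h::complex_inner)"
    and "\<And>e. cinner y e = cinner f (g e)"
  shows "adjoint_op g f = y"
  using assms by (intro cinner_ext) (simp add: adjoint_prop)

lemma adjoint_add:
  assumes "bounded_clinear (g :: 'e::chilbert \<Rightarrow> 'h::complex_inner)"
  shows "adjoint_op g (a + b) = adjoint_op g a + adjoint_op g b"
  by (rule adjoint_unique[OF assms]) (simp add: cinner_add_left adjoint_prop[OF assms])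

lemma adjoint_scale:
  assumes "bounded_clinear (g :: 'e::chilbert \<Rightarrow> 'h::complex_inner)"
  shows "adjoint_op g (c *\<^sub>C a) = c *\<^sub>C adjoint_op g a"
  by (rule adjoint_unique[OF assms]) (simp add: cinner_scaleC_left adjoint_prop[OF assms])

lemma adjoint_clinear:
  assumes "bounded_clinear (g :: 'e::chilbert \<Rightarrow> 'h::complex_inner)"
  shows "clinear (adjoint_op g)"
  unfolding clinear_def using adjoint_add[OF assms] adjoint_scale[OF assms] by blast

lemma adjoint_bound:
  assumes "bounded_clinear (g :: 'e::chilbert \<Rightarrow> 'h::complex_inner)"
  obtains K where "K > 0" "\<And>f. norm (adjoint_op g f) \<le> norm f * K"
proof -
  obtain K where K: "K > 0" "\<And>x. norm (g x) \<le> norm x * K" using bcl_bound[OF assms] by blast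
  have "norm (adjoint_op g f) \<le> norm f * K" for f
  proof (cases "adjoint_op g f = 0")
    case True thus ?thesis using K by simp
  next
    case False
    let ?a = "adjoint_op g f"
    have "(norm ?a)^2 = Re (cinner ?a ?a)" by (simp add: ci_self)
    also have "\<dots> = Re (cinner f (g ?a))" by (simp add: adjoint_prop[OF assms])
    also have "\<dots> \<le> cmod (cinner f (g ?a))" by (rule complex_Re_le_cmod)
    also have "\<dots> \<le> norm f * norm (g ?a)" by (rule cauchy_schwarz)
    also have "\<dots> \<le> norm f * (norm ?a * K)" by (intro mult_left_mono K(2)) simp
    finally have "norm ?a * norm ?a \<le> (norm f * K) * norm ?a" by (simp add: power2_eq_square mult_ac)
    thus ?thesis using False by simp
  qed
  thus ?thesis using that K by blast
qed

lemma adjoint_bcl: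
  assumes "bounded_clinear (g :: 'e::chilbert \<Rightarrow> 'h::complex_inner)"
  shows "bounded_clinear (adjoint_op g)"
  unfolding bounded_clinear_def using adjoint_clinear[OF assms] adjoint_bound[OF assms] by blast

interpretation cmodule: module "scaleC :: complex \<Rightarrow> 'a::complex_vector \<Rightarrow> 'a"
  by standard (simp_all add: scaleC_add_right scaleC_add_left scaleC_scaleC scaleC_one)

definition Sinv :: "('h::complex_inner \<Rightarrow> 'h) \<Rightarrow> complex \<Rightarrow> 'h \<Rightarrow> 'h" where
  "Sinv T z = (SOME S. bounded_clinear S \<and> (\<forall>x. S (x - z *\<^sub>C T x) = x) \<and> (\<forall>x. S x - z *\<^sub>C T (S x) = x))"

lemma Sinv_prop:
  assumes "boundedly_invertible (\<lambda>x. x - z *\<^sub>C T x)"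
  shows "bounded_clinear (Sinv T z)" "\<And>x. Sinv T z (x - z *\<^sub>C T x) = x" "\<And>x. Sinv T z x - z *\<^sub>C T (Sinv T z x) = x"
proof -
  have "\<exists>S. bounded_clinear S \<and> (\<forall>x. S (x - z *\<^sub>C T x) = x) \<and> (\<forall>x. S x - z *\<^sub>C T (S x) = x)"
    using assms unfolding boundedly_invertible_def by simp
  from someI_ex[OF this] show "bounded_clinear (Sinv T z)" "\<And>x. Sinv T z (x - z *\<^sub>C T x) = x" "\<And>x. Sinv T z x - z *\<^sub>C T (Sinv T z x) = x"
    unfolding Sinv_def by blast+
qed

lemma F_clinear:
  assumes "clinear T"
  shows "clinear (\<lambda>x. x - w *\<^sub>C T x)"
  unfolding clinear_def
  by (simp add: clin_add[OF assms] clin_scale[OF assms] algebra_simps mult.commute)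

lemma perturb:
  fixes T :: "'h::chilbert \<Rightarrow> 'h"
  assumes bT: "bounded_clinear T" and inv: "boundedly_invertible (\<lambda>x. x - z *\<^sub>C T x)"
  obtains \<delta> C where "\<delta> > 0" "C > 0"
    "\<And>w. cmod (w - z) < \<delta> \<Longrightarrow> boundedly_invertible (\<lambda>x. x - w *\<^sub>C T x) \<and> (\<forall>y. norm (Sinv T w y) \<le> norm y * C)"
proof -
  have clT: "clinear T" using bT by (rule bcl_clinear)
  note Sz = Sinv_prop[OF inv]
  have clS: "clinear (Sinv T z)" using Sz(1) by (rule bcl_clinear)
  obtain Ks where Ks: "Ks > 0" "\<And>x. norm (Sinv T z x) \<le> norm x * Ks" using bcl_bound[OF Sz(1)] by blast
  obtain KT where KT: "KT > 0" "\<And>x. norm (T x) \<le> norm x * KT" using bcl_bound[OF bT] by blast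
  define \<delta> where "\<delta> = 1 / (2 * Ks * KT)"
  have \<delta>: "\<delta> > 0" unfolding \<delta>_def using Ks KT by simp
  have main: "boundedly_invertible (\<lambda>x. x - w *\<^sub>C T x) \<and> (\<forall>y. norm (Sinv T w y) \<le> norm y * (2 * Ks))"
    if wz: "cmod (w - z) < \<delta>" for w
  proof -
    define q where "q = cmod (w - z) * Ks * KT"
    have q0: "0 \<le> q" unfolding q_def using Ks KT by simp
    have q1: "q < 1/2"
    proof -
      have "q < \<delta> * Ks * KT" unfolding q_def using wz Ks KT by simp
      thus ?thesis unfolding \<delta>_def using Ks KT by simp
    qed
    define F where "F = (\<lambda>x. x - w *\<^sub>C T x)"
    have clF: "clinear F" unfolding F_def by (rule F_clinear[OF clT])
    have eqz: "x - z *\<^sub>C T x = F x + (w - z) *\<^sub>C T x" for x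
      unfolding F_def by (simp add: algebra_simps)
    have bnd: "norm x \<le> 2 * Ks * norm (F x)" for x
    proof -
      have "x = Sinv T z (F x + (w - z) *\<^sub>C T x)" using Sz(2)[of x] eqz[of x] by simp
      hence "norm x \<le> norm (F x + (w - z) *\<^sub>C T x) * Ks" using Ks(2) by metis
      also have "\<dots> \<le> (norm (F x) + cmod (w - z) * (norm x * KT)) * Ks"
      proof -
        have "norm (F x + (w - z) *\<^sub>C T x) \<le> norm (F x) + norm ((w - z) *\<^sub>C T x)" by (rule norm_triangle_ineq)
        also have "norm ((w - z) *\<^sub>C T x) = cmod (w - z) * norm (T x)" by (rule norm_sC)
        also have "\<dots> \<le> cmod (w - z) * (norm x * KT)" by (intro mult_left_mono KT(2)) simp
        finally show ?thesis using Ks by (intro mult_right_mono) auto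
      qed
      also have "\<dots> = Ks * norm (F x) + q * norm x" unfolding q_def by (simp add: algebra_simps)
      also have "\<dots> \<le> Ks * norm (F x) + (1/2) * norm x" using q1 by (intro add_left_mono mult_right_mono) auto
      finally show ?thesis by (simp add: algebra_simps)
    qed
    have inj: "a = b" if "F a = F b" for a b
    proof -
      have "F (a - b) = 0" using that by (simp add: clin_diff[OF clF])
      hence "norm (a - b) \<le> 0" using bnd[of "a - b"] by simp
      thus ?thesis by simp
    qed
    have surj: "\<exists>x. F x = y" for y
    proof -
      define f where "f = (\<lambda>x. Sinv T z (y + (w - z) *\<^sub>C T x))"
      have "\<exists>!x. f x = x"
      proof (rule banach_fix_type[of q])
        show "0 \<le> q" by (rule q0)
        show "q < 1" using q1 by simp
        show "\<forall>a b. dist (f a) (f b) \<le> q * dist a b"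
        proof (intro allI)
          fix a b
          have "f a - f b = Sinv T z ((w - z) *\<^sub>C T (a - b))"
            unfolding f_def by (simp add: clin_diff[OF clS, symmetric] clin_diff[OF clT] algebra_simps)
          hence "norm (f a - f b) \<le> norm ((w - z) *\<^sub>C T (a - b)) * Ks" using Ks(2) by metis
          also have "\<dots> = cmod (w - z) * norm (T (a - b)) * Ks" by (simp add: norm_sC)
          also have "\<dots> \<le> cmod (w - z) * (norm (a - b) * KT) * Ks"
            using Ks KT(2)[of "a - b"] by (intro mult_right_mono mult_left_mono) auto
          also have "\<dots> = q * norm (a - b)" unfolding q_def by (simp add: algebra_simps)
          finally show "dist (f a) (f b) \<le> q * dist a b" by (simp add: dist_norm)
        qed
      qed
      then obtain x where x: "f x = x" by blast
      have "x - z *\<^sub>C T x = y + (w - z) *\<^sub>C T x"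
        using Sz(3)[of "y + (w - z) *\<^sub>C T x"] x unfolding f_def by simp
      hence "F x = y" unfolding F_def by (simp add: algebra_simps)
      thus ?thesis by blast
    qed
    define S' where "S' = (\<lambda>y. SOME x. F x = y)"
    have FS: "F (S' y) = y" for y unfolding S'_def using someI_ex[OF surj[of y]] .
    have SF: "S' (F x) = x" for x using FS[of "F x"] by (rule inj)
    have "clinear S'"
      unfolding clinear_def
    proof (intro conjI allI)
      fix a b
      show "S' (a + b) = S' a + S' b" by (rule inj) (simp add: FS clin_add[OF clF])
    next
      fix c a
      show "S' (c *\<^sub>C a) = c *\<^sub>C S' a" by (rule inj) (simp add: FS clin_scale[OF clF])
    qed
    moreover have "norm (S' y) \<le> norm y * (2 * Ks)" for y using bnd[of "S' y"] by (simp add: FS mult_ac)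
    ultimately have "bounded_clinear S'" unfolding bounded_clinear_def by blast
    hence bi: "boundedly_invertible F" unfolding boundedly_invertible_def using FS SF by blast
    have "norm (Sinv T w y) \<le> norm y * (2 * Ks)" for y
      using bnd[of "Sinv T w y"] Sinv_prop(3)[OF bi[unfolded F_def], of y] unfolding F_def by (simp add: mult_ac)
    thus ?thesis using bi unfolding F_def by blast
  qed
  show ?thesis by (rule that[OF \<delta> _ main]) (use Ks in auto)
qed

lemma bcl_comp: "bounded_clinear f \<Longrightarrow> bounded_clinear g \<Longrightarrow> bounded_clinear (\<lambda>x. f (g x))"
proof -
  assume f: "bounded_clinear f" and g: "bounded_clinear g"
  obtain Kf where Kf: "Kf > 0" "\<And>x. norm (f x) \<le> norm x * Kf" using bcl_bound[OF f] by blast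
  obtain Kg where Kg: "Kg > 0" "\<And>x. norm (g x) \<le> norm x * Kg" using bcl_bound[OF g] by blast
  have "clinear (\<lambda>x. f (g x))" unfolding clinear_def
    by (simp add: clin_add[OF bcl_clinear[OF f]] clin_add[OF bcl_clinear[OF g]]
        clin_scale[OF bcl_clinear[OF f]] clin_scale[OF bcl_clinear[OF g]])
  moreover have "norm (f (g x)) \<le> norm x * (Kg * Kf)" for x
  proof -
    have "norm (f (g x)) \<le> norm (g x) * Kf" by (rule Kf(2))
    also have "\<dots> \<le> norm x * Kg * Kf" using Kf by (intro mult_right_mono Kg(2)) auto
    finally show ?thesis by (simp add: mult_ac)
  qed
  ultimately show ?thesis unfolding bounded_clinear_def by blast
qed

lemma bcl_scale: "bounded_clinear f \<Longrightarrow> bounded_clinear (\<lambda>x. c *\<^sub>C f x)"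
proof -
  assume f: "bounded_clinear f"
  obtain Kf where Kf: "Kf > 0" "\<And>x. norm (f x) \<le> norm x * Kf" using bcl_bound[OF f] by blast
  have "clinear (\<lambda>x. c *\<^sub>C f x)" unfolding clinear_def
    by (simp add: clin_add[OF bcl_clinear[OF f]] clin_scale[OF bcl_clinear[OF f]] algebra_simps mult.commute)
  moreover have "norm (c *\<^sub>C f x) \<le> norm x * (cmod c * Kf)" for x
  proof -
    have "norm (c *\<^sub>C f x) = cmod c * norm (f x)" by (rule norm_sC)
    also have "\<dots> \<le> cmod c * (norm x * Kf)" by (intro mult_left_mono Kf(2)) simp
    finally show ?thesis by (simp add: mult_ac)
  qed
  ultimately show ?thesis unfolding bounded_clinear_def by blast
qed

lemma onorm_nonneg_bd:
  assumes "\<And>x. norm (f x) \<le> b * norm x"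
  shows "0 \<le> onorm f"
  unfolding onorm_def
proof (rule cSUP_upper2[where x = 0])
  show "bdd_above (range (\<lambda>x. norm (f x) / norm x))"
  proof (rule bdd_aboveI2[where M = "max b 0"])
    fix x
    show "norm (f x) / norm x \<le> max b 0"
    proof (cases "x = 0")
      case False
      hence "norm (f x) / norm x \<le> b" using assms[of x] by (simp add: pos_divide_le_eq)
      thus ?thesis by simp
    qed simp
  qed
qed auto

lemma resolvent1:
  assumes bT: "bounded_clinear T"
    and iz: "boundedly_invertible (\<lambda>x. x - z *\<^sub>C T x)"
    and iw: "boundedly_invertible (\<lambda>x. x - w *\<^sub>C T x)"
  shows "Sinv T w y - Sinv T z y = (w - z) *\<^sub>C Sinv T w (T (Sinv T z y))"
proof -
  have clT: "clinear T" using bT by (rule bcl_clinear)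
  have clW: "clinear (Sinv T w)" using Sinv_prop(1)[OF iw] by (rule bcl_clinear)
  define a where "a = Sinv T z y"
  have y: "y = a - z *\<^sub>C T a" unfolding a_def using Sinv_prop(3)[OF iz, of y] by simp
  have "y = (a - w *\<^sub>C T a) + (w - z) *\<^sub>C T a" unfolding y by (simp add: algebra_simps)
  hence "Sinv T w y = a + (w - z) *\<^sub>C Sinv T w (T a)"
    by (simp add: clin_add[OF clW] clin_scale[OF clW] Sinv_prop(2)[OF iw])
  thus ?thesis unfolding a_def by simp
qed

lemma resolvent2:
  assumes bT: "bounded_clinear T"
    and iz: "boundedly_invertible (\<lambda>x. x - z *\<^sub>C T x)"
    and iw: "boundedly_invertible (\<lambda>x. x - w *\<^sub>C T x)"
  shows "w *\<^sub>C Sinv T w y - z *\<^sub>C Sinv T z y = (w - z) *\<^sub>C Sinv T w (Sinv T z y)"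
proof -
  have clT: "clinear T" using bT by (rule bcl_clinear)
  have clW: "clinear (Sinv T w)" using Sinv_prop(1)[OF iw] by (rule bcl_clinear)
  define a where "a = Sinv T z y"
  have r1: "Sinv T w y = a + (w - z) *\<^sub>C Sinv T w (T a)"
    using resolvent1[OF bT iz iw, of y] unfolding a_def by (simp add: algebra_simps)
  have "a = (a - w *\<^sub>C T a) + w *\<^sub>C T a" by simp
  hence "Sinv T w a = a + w *\<^sub>C Sinv T w (T a)"
    by (metis clin_add[OF clW] clin_scale[OF clW] Sinv_prop(2)[OF iw])
  thus ?thesis unfolding r1 a_def[symmetric] by (simp add: algebra_simps)
qed

lemma decomp_unique:
  assumes cT: "clinear T" and cg: "clinear g"
    and kT: "{f. T f = 0} = {0}" and kg: "{\<phi>. g \<phi> = 0} = {0}"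
    and rr: "range T \<inter> range g = {0}"
    and eq: "T f + g \<phi> = T f' + g \<phi>'"
  shows "f = f' \<and> \<phi> = \<phi>'"
proof -
  have e: "T (f - f') = g (\<phi>' - \<phi>)" using eq by (simp add: clin_diff[OF cT] clin_diff[OF cg] algebra_simps)
  hence "T (f - f') \<in> range T \<inter> range g" by (metis IntI rangeI)
  hence "T (f - f') = 0" using rr by blast
  hence a: "f - f' = 0" using kT by blast
  have "g (\<phi>' - \<phi>) = 0" using e \<open>T (f - f') = 0\<close> by simp
  hence "\<phi>' - \<phi> = 0" using kg by blast
  thus ?thesis using a by simp
qed

lemma opA_eq:
  assumes cT: "clinear T" and cg: "clinear g"
    and kT: "{f. T f = 0} = {0}" and kg: "{\<phi>. g \<phi> = 0} = {0}"
    and rr: "range T \<inter> range g = {0}"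
  shows "opA T g (T f + g \<phi>) = f" "Gamma0 T g (T f + g \<phi>) = \<phi>"
proof -
  show "opA T g (T f + g \<phi>) = f" unfolding opA_def
  proof (rule the_equality)
    show "\<exists>\<phi>'. T f + g \<phi> = T f + g \<phi>'" by blast
    show "f' = f" if "\<exists>\<phi>'. T f + g \<phi> = T f' + g \<phi>'" for f'
      using that decomp_unique[OF cT cg kT kg rr] by metis
  qed
  show "Gamma0 T g (T f + g \<phi>) = \<phi>" unfolding Gamma0_def
  proof (rule the_equality)
    show "\<exists>f'. T f + g \<phi> = T f' + g \<phi>" by blast
    show "\<phi>' = \<phi>" if "\<exists>f'. T f + g \<phi> = T f' + g \<phi>'" for \<phi>'
      using that decomp_unique[OF cT cg kT kg rr] by metis
  qed
qed

theorem corollary1: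
  fixes T :: "'h::chilbert \<Rightarrow> 'h"
    and \<gamma> :: "'e::chilbert \<Rightarrow> 'h"
    and \<Lambda> :: "'e \<Rightarrow> 'e"
    and D\<Lambda> :: "'e set"
  assumes "bounded_clinear T"
    and "{f. T f = 0} = {0}"
    and "bounded_clinear \<gamma>"
    and "{\<phi>. \<gamma> \<phi> = 0} = {0}"
    and "range T \<inter> range \<gamma> = {0}"
    and "clinear_operator D\<Lambda> \<Lambda>"
  shows "\<exists>B :: complex \<Rightarrow> 'e \<Rightarrow> 'e.
           analytic_op_function {z. boundedly_invertible (\<lambda>x. x - z *\<^sub>C T x)} B \<and>
           (\<forall>z \<in> {z. boundedly_invertible (\<lambda>x. x - z *\<^sub>C T x)}.
              fst ` Mgraph T \<gamma> \<Lambda> D\<Lambda> z = D\<Lambda> \<and>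
              (\<forall>\<phi> \<psi> \<psi>0. (\<phi>, \<psi>) \<in> Mgraph T \<gamma> \<Lambda> D\<Lambda> z \<longrightarrow> (\<phi>, \<psi>0) \<in> Mgraph T \<gamma> \<Lambda> D\<Lambda> 0 \<longrightarrow>
                 B z \<phi> = \<psi> - \<psi>0))"
proof -
  have clT: "clinear T" using assms(1) by (rule bcl_clinear)
  have clg: "clinear \<gamma>" using assms(3) by (rule bcl_clinear)
  note dec = opA_eq[OF clT clg assms(2) assms(4) assms(5)]
  have bA: "bounded_clinear (adjoint_op \<gamma>)" by (rule adjoint_bcl[OF assms(3)])
  have clA: "clinear (adjoint_op \<gamma>)" using bA by (rule bcl_clinear)
  obtain Ka where Ka: "Ka > 0" "\<And>x. norm (adjoint_op \<gamma> x) \<le> norm x * Ka" using bcl_bound[OF bA] by blast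
  obtain Kg where Kg: "Kg > 0" "\<And>x. norm (\<gamma> x) \<le> norm x * Kg" using bcl_bound[OF assms(3)] by blast
  obtain KT where KT: "KT > 0" "\<And>x. norm (T x) \<le> norm x * KT" using bcl_bound[OF assms(1)] by blast
  define S where "S = {z. boundedly_invertible (\<lambda>x. x - z *\<^sub>C T x)}"
  define B where "B = (\<lambda>z x. adjoint_op \<gamma> (z *\<^sub>C Sinv T z (\<gamma> x)))"
  have openS: "open S" unfolding open_contains_ball
  proof
    fix z assume "z \<in> S"
    hence iz: "boundedly_invertible (\<lambda>x. x - z *\<^sub>C T x)" unfolding S_def by simp
    obtain \<delta> C where dc: "\<delta> > 0" "C > 0"
      "\<And>w. cmod (w - z) < \<delta> \<Longrightarrow> boundedly_invertible (\<lambda>x. x - w *\<^sub>C T x) \<and> (\<forall>y. norm (Sinv T w y) \<le> norm y * C)"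
      using perturb[OF assms(1) iz] by blast
    have "ball z \<delta> \<subseteq> S"
    proof
      fix w assume "w \<in> ball z \<delta>"
      hence "cmod (w - z) < \<delta>" by (simp add: dist_norm norm_minus_commute)
      thus "w \<in> S" using dc(3) unfolding S_def by blast
    qed
    thus "\<exists>e>0. ball z e \<subseteq> S" using dc(1) by blast
  qed
  have analytic: "analytic_op_function S B"
    unfolding analytic_op_function_def
  proof (intro conjI ballI openS)
    fix z assume "z \<in> S"
    hence iz: "boundedly_invertible (\<lambda>x. x - z *\<^sub>C T x)" unfolding S_def by simp
    note Sz = Sinv_prop[OF iz]
    show "bounded_clinear (B z)" unfolding B_def
      by (rule bcl_comp[OF bA bcl_scale[OF bcl_comp[OF Sz(1) assms(3)]]])
    define D where "D = (\<lambda>x. adjoint_op \<gamma> (Sinv T z (Sinv T z (\<gamma> x))))"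
    have bD: "bounded_clinear D" unfolding D_def
      by (rule bcl_comp[OF bA bcl_comp[OF Sz(1) bcl_comp[OF Sz(1) assms(3)]]])
    obtain Ks where Ks: "Ks > 0" "\<And>x. norm (Sinv T z x) \<le> norm x * Ks" using bcl_bound[OF Sz(1)] by blast
    have clS: "clinear (Sinv T z)" using Sz(1) by (rule bcl_clinear)
    obtain \<delta> C where dc: "\<delta> > 0" "C > 0"
      "\<And>w. cmod (w - z) < \<delta> \<Longrightarrow> boundedly_invertible (\<lambda>x. x - w *\<^sub>C T x) \<and> (\<forall>y. norm (Sinv T w y) \<le> norm y * C)"
      using perturb[OF assms(1) iz] by blast
    define M where "M = Ka * (Kg * Ks * Ks * KT * C)"
    have M0: "M \<ge> 0" unfolding M_def using Ka Kg Ks KT dc by simp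
    have est: "norm (onorm (\<lambda>x. B w x - B z x - (w - z) *\<^sub>C D x) / cmod (w - z)) \<le> M * cmod (w - z)"
      if w: "w \<noteq> z" "cmod (w - z) < \<delta>" for w
    proof -
      have iw: "boundedly_invertible (\<lambda>x. x - w *\<^sub>C T x)" and Cw: "\<And>y. norm (Sinv T w y) \<le> norm y * C"
        using dc(3)[OF w(2)] by auto
      have clW: "clinear (Sinv T w)" using Sinv_prop(1)[OF iw] by (rule bcl_clinear)
      have pt: "norm (B w x - B z x - (w - z) *\<^sub>C D x) \<le> (cmod (w - z))^2 * M * norm x" for x
      proof -
        define g where "g = \<gamma> x"
        define h where "h = Sinv T z (Sinv T z g)"
        have "B w x - B z x - (w - z) *\<^sub>C D x
            = adjoint_op \<gamma> ((w *\<^sub>C Sinv T w g - z *\<^sub>C Sinv T z g) - (w - z) *\<^sub>C Sinv T z (Sinv T z g))"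
          unfolding B_def D_def g_def by (simp add: clin_diff[OF clA] clin_scale[OF clA])
        also have "(w *\<^sub>C Sinv T w g - z *\<^sub>C Sinv T z g) - (w - z) *\<^sub>C Sinv T z (Sinv T z g)
            = (w - z) *\<^sub>C (Sinv T w (Sinv T z g) - Sinv T z (Sinv T z g))"
          by (simp add: resolvent2[OF assms(1) iz iw] algebra_simps)
        also have "Sinv T w (Sinv T z g) - Sinv T z (Sinv T z g) = (w - z) *\<^sub>C Sinv T w (T h)"
          unfolding h_def by (rule resolvent1[OF assms(1) iz iw])
        finally have eq: "B w x - B z x - (w - z) *\<^sub>C D x = adjoint_op \<gamma> ((w - z) *\<^sub>C ((w - z) *\<^sub>C Sinv T w (T h)))" .
        have nh: "norm h \<le> norm x * (Kg * Ks * Ks)"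
        proof -
          have "norm h \<le> norm (Sinv T z g) * Ks" unfolding h_def by (rule Ks(2))
          also have "\<dots> \<le> norm g * Ks * Ks" using Ks by (intro mult_right_mono Ks(2)) auto
          also have "\<dots> \<le> norm x * Kg * Ks * Ks" unfolding g_def using Ks
            by (intro mult_right_mono Kg(2)) auto
          finally show ?thesis by (simp add: mult_ac)
        qed
        have n2: "norm (Sinv T w (T h)) \<le> norm x * (Kg * Ks * Ks * KT * C)"
        proof -
          have "norm (Sinv T w (T h)) \<le> norm (T h) * C" by (rule Cw)
          also have "\<dots> \<le> norm h * KT * C" using dc(2) by (intro mult_right_mono KT(2)) auto
          also have "\<dots> \<le> norm x * (Kg * Ks * Ks) * KT * C" using dc(2) KT(1) nh
            by (intro mult_right_mono) auto
          finally show ?thesis by (simp add: mult_ac)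
        qed
        have "norm (B w x - B z x - (w - z) *\<^sub>C D x) \<le> norm ((w - z) *\<^sub>C ((w - z) *\<^sub>C Sinv T w (T h))) * Ka"
          unfolding eq by (rule Ka(2))
        also have "\<dots> = cmod (w - z) * cmod (w - z) * norm (Sinv T w (T h)) * Ka" by (simp add: norm_sC norm_mult)
        also have "\<dots> \<le> cmod (w - z) * cmod (w - z) * (norm x * (Kg * Ks * Ks * KT * C)) * Ka"
          using Ka(1) n2 by (intro mult_right_mono mult_left_mono) auto
        also have "\<dots> = (cmod (w - z))^2 * M * norm x" unfolding M_def by (simp add: power2_eq_square mult_ac)
        finally show ?thesis .
      qed
      have on1: "onorm (\<lambda>x. B w x - B z x - (w - z) *\<^sub>C D x) \<le> (cmod (w - z))^2 * M"
        by (rule onorm_bound) (use M0 pt in auto)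
      have on0: "0 \<le> onorm (\<lambda>x. B w x - B z x - (w - z) *\<^sub>C D x)"
        by (rule onorm_nonneg_bd[OF pt])
      have cw: "cmod (w - z) > 0" using w(1) by simp
      have "onorm (\<lambda>x. B w x - B z x - (w - z) *\<^sub>C D x) / cmod (w - z) \<le> (cmod (w - z))^2 * M / cmod (w - z)"
        using on1 cw by (intro divide_right_mono) auto
      also have "\<dots> = M * cmod (w - z)" using cw by (simp add: power2_eq_square)
      finally show ?thesis using on0 cw by simp
    qed
    have "op_has_cderiv B D z" unfolding op_has_cderiv_def
    proof (rule Lim_null_comparison)
      show "\<forall>\<^sub>F w in at z. norm (onorm (\<lambda>x. B w x - B z x - (w - z) *\<^sub>C D x) / cmod (w - z)) \<le> M * cmod (w - z)"
        unfolding eventually_at using dc(1) est by (auto simp: dist_norm)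
      have "((\<lambda>w. M * cmod (w - z)) \<longlongrightarrow> M * cmod (z - z)) (at z)" by (intro tendsto_intros)
      thus "((\<lambda>w. M * cmod (w - z)) \<longlongrightarrow> 0) (at z)" by simp
    qed
    thus "\<exists>D. bounded_clinear D \<and> op_has_cderiv B D z" using bD by blast
  qed
  have graph: "fst ` Mgraph T \<gamma> \<Lambda> D\<Lambda> z = D\<Lambda> \<and>
              (\<forall>\<phi> \<psi> \<psi>0. (\<phi>, \<psi>) \<in> Mgraph T \<gamma> \<Lambda> D\<Lambda> z \<longrightarrow> (\<phi>, \<psi>0) \<in> Mgraph T \<gamma> \<Lambda> D\<Lambda> 0 \<longrightarrow>
                 B z \<phi> = \<psi> - \<psi>0)" if "z \<in> S" for z
  proof -
    have iz: "boundedly_invertible (\<lambda>x. x - z *\<^sub>C T x)" using that unfolding S_def by simp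
    note Sz = Sinv_prop[OF iz]
    have clS: "clinear (Sinv T z)" using Sz(1) by (rule bcl_clinear)
    have solve: "f = z *\<^sub>C Sinv T z (\<gamma> \<phi>)" if "f = z *\<^sub>C (T f + \<gamma> \<phi>)" for f \<phi>
    proof -
      have "f - z *\<^sub>C T f = z *\<^sub>C \<gamma> \<phi>" using that by (simp add: algebra_simps)
      hence "Sinv T z (f - z *\<^sub>C T f) = Sinv T z (z *\<^sub>C \<gamma> \<phi>)" by simp
      thus ?thesis by (simp add: Sz(2) clin_scale[OF clS])
    qed
    have "fst ` Mgraph T \<gamma> \<Lambda> D\<Lambda> z = D\<Lambda>"
    proof
      show "fst ` Mgraph T \<gamma> \<Lambda> D\<Lambda> z \<subseteq> D\<Lambda>"
        unfolding Mgraph_def kerAz_def domGamma1_def using dec by auto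
      show "D\<Lambda> \<subseteq> fst ` Mgraph T \<gamma> \<Lambda> D\<Lambda> z"
      proof
        fix \<phi> assume \<phi>: "\<phi> \<in> D\<Lambda>"
        define f where "f = z *\<^sub>C Sinv T z (\<gamma> \<phi>)"
        define u where "u = T f + \<gamma> \<phi>"
        have "f - z *\<^sub>C T f = z *\<^sub>C (Sinv T z (\<gamma> \<phi>) - z *\<^sub>C T (Sinv T z (\<gamma> \<phi>)))"
          unfolding f_def by (simp add: clin_scale[OF clT] algebra_simps)
        hence "f - z *\<^sub>C T f = z *\<^sub>C \<gamma> \<phi>" by (simp only: Sz(3))
        hence fu: "f = z *\<^sub>C u" unfolding u_def by (simp add: algebra_simps)
        have "u \<in> kerAz T \<gamma> D\<Lambda> z" unfolding kerAz_def domGamma1_def u_def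
          using \<phi> fu dec unfolding u_def by auto
        hence "(Gamma0 T \<gamma> u, Gamma1 T \<gamma> \<Lambda> u) \<in> Mgraph T \<gamma> \<Lambda> D\<Lambda> z" unfolding Mgraph_def by blast
        moreover have "Gamma0 T \<gamma> u = \<phi>" unfolding u_def by (rule dec(2))
        ultimately show "\<phi> \<in> fst ` Mgraph T \<gamma> \<Lambda> D\<Lambda> z" by force
      qed
    qed
    moreover have "B z \<phi> = \<psi> - \<psi>0"
      if m1: "(\<phi>, \<psi>) \<in> Mgraph T \<gamma> \<Lambda> D\<Lambda> z" and m0: "(\<phi>, \<psi>0) \<in> Mgraph T \<gamma> \<Lambda> D\<Lambda> 0" for \<phi> \<psi> \<psi>0
    proof -
      obtain f \<phi>1 where u1: "\<phi>1 \<in> D\<Lambda>" "opA T \<gamma> (T f + \<gamma> \<phi>1) = z *\<^sub>C (T f + \<gamma> \<phi>1)"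
        "\<phi> = Gamma0 T \<gamma> (T f + \<gamma> \<phi>1)" "\<psi> = Gamma1 T \<gamma> \<Lambda> (T f + \<gamma> \<phi>1)"
        using m1 unfolding Mgraph_def kerAz_def domGamma1_def by blast
      obtain f0 \<phi>0 where u0: "\<phi>0 \<in> D\<Lambda>" "opA T \<gamma> (T f0 + \<gamma> \<phi>0) = 0 *\<^sub>C (T f0 + \<gamma> \<phi>0)"
        "\<phi> = Gamma0 T \<gamma> (T f0 + \<gamma> \<phi>0)" "\<psi>0 = Gamma1 T \<gamma> \<Lambda> (T f0 + \<gamma> \<phi>0)"
        using m0 unfolding Mgraph_def kerAz_def domGamma1_def by blast
      have p1: "\<phi>1 = \<phi>" using u1(3) dec by simp
      have p0: "\<phi>0 = \<phi>" using u0(3) dec by simp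
      have f0: "f0 = 0" using u0(2) dec by simp
      have ff: "f = z *\<^sub>C (T f + \<gamma> \<phi>)" using u1(2) dec p1 by simp
      have "\<psi> = adjoint_op \<gamma> f + \<Lambda> \<phi>" using u1(4) p1 dec unfolding Gamma1_def by simp
      moreover have "\<psi>0 = \<Lambda> \<phi>" using u0(4) p0 f0 dec clin_zero[OF clA] unfolding Gamma1_def by simp
      ultimately have "\<psi> - \<psi>0 = adjoint_op \<gamma> f" by simp
      also have "\<dots> = B z \<phi>" unfolding B_def using solve[OF ff] by simp
      finally show ?thesis by simp
    qed
    ultimately show ?thesis by blast
  qed
  show ?thesis
    by (rule exI[of _ B]) (use analytic graph in \<open>auto simp: S_def\<close>)
qed

end
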